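(* Let $\mathcal{X}$ be a finite set, let $\eta \in [0,1/2]$, $\gamma>0$, and let $p^{(0)}$ be the uniform distribution on $\mathcal{X}$. Let $h^{(1)},\dots,h^{(T)}:\mathcal{X}\to[0,1]$ be functions and define distributions recursively by $p^{(t)}(x) \propto p^{(t-1)}(x)\,(1-\eta h^{(t)}(x))$ (normalized to sum to $1$ over $\mathcal{X}$). Assume that for every $t\in\{1,\dots,T\}$, \[\sum_{x\in\mathcal{X}} h^{(t)}(x)\,p^{(t-1)}(x) \ge \gamma .\] Let $M_T(x) = \sum_{t=1}^T h^{(t)}(x)$. Then for all $x\in\mathcal{X}$, \[\log p^{(T)}(x) \ge \frac{\gamma\eta}{\eta+2}\,T - \eta(\eta+1)\,M_T(x) - \log(2|\mathcal{X}|).\]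
   Context: $M_T(x)$ counts (fractionally) how many times the classifiers $h^{(t)}$ downweight the point $x$. *)

theory Defs
  imports "HOL-Analysis.Analysis"
begin

text \<open>Classifiers are indexed h 1, ..., h T.\<close>

fun mw_dist :: "'a set \<Rightarrow> real \<Rightarrow> (nat \<Rightarrow> 'a \<Rightarrow> real) \<Rightarrow> nat \<Rightarrow> 'a \<Rightarrow> real" where
  "mw_dist X eta h 0 = (\<lambda>x. 1 / real (card X))"
| "mw_dist X eta h (Suc t) =
     (\<lambda>x. mw_dist X eta h t x * (1 - eta * h (Suc t) x) /
          (\<Sum>y\<in>X. mw_dist X eta h t y * (1 - eta * h (Suc t) y)))"

end

theory Submission
  imports Defs
begin

lemma ln_lb:
  fixes u :: real
  assumes "0 \<le> u" "u \<le> 1/2"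
  shows "-u - u^2 \<le> ln (1-u)"
proof -
  define f where "f v = ln (1-v) + v + v^2" for v::real
  have "f 0 \<le> f u"
  proof (rule DERIV_nonneg_imp_nondecreasing[OF assms(1)])
    fix v :: real assume v: "0 \<le> v" "v \<le> u"
    have v1: "1 - v > 0" using v assms by simp
    have "DERIV f v :> (- 1 / (1 - v) + 1 + 2 * v)"
      unfolding f_def using v1
      by (auto intro!: derivative_eq_intros)
    moreover have "- 1 / (1 - v) + 1 + 2 * v = v * (1 - 2 * v) / (1 - v)"
      using v1 by (simp add: field_simps)
    moreover have "v * (1 - 2 * v) / (1 - v) \<ge> 0" using v assms by simp
    ultimately show "\<exists>y. DERIV f v :> y \<and> 0 \<le> y" by metis
  qed
  then show ?thesis unfolding f_def by simp
qed

theorem theorem1: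
  fixes X :: "'a set" and eta gamma :: real and h :: "nat \<Rightarrow> 'a \<Rightarrow> real" and T :: nat
  assumes "finite X" and "X \<noteq> {}"
    and "0 \<le> eta" and "eta \<le> 1/2" and "gamma > 0"
    and "\<And>t x. t \<in> {1..T} \<Longrightarrow> x \<in> X \<Longrightarrow> 0 \<le> h t x \<and> h t x \<le> 1"
    and "\<And>t. t \<in> {1..T} \<Longrightarrow> (\<Sum>x\<in>X. h t x * mw_dist X eta h (t - 1) x) \<ge> gamma"
  shows "\<forall>x\<in>X. ln (mw_dist X eta h T x)
           \<ge> gamma * eta / (eta + 2) * real T - eta * (eta + 1) * (\<Sum>t=1..T. h t x)
             - ln (2 * real (card X))"
proof -
  note fin = assms(1) and ne = assms(2) and e0 = assms(3) and e1 = assms(4) and g0 = assms(5)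
    and hb = assms(6) and adv = assms(7)
  let ?p = "mw_dist X eta h"
  have cpos: "card X > 0" using fin ne card_gt_0_iff by blast
  have inv: "t \<le> T \<Longrightarrow> (\<forall>x\<in>X. ?p t x > 0) \<and> sum (?p t) X = 1 \<and>
     (\<forall>x\<in>X. ln (?p t x) \<ge> eta*gamma*real t - eta*(eta+1)*(\<Sum>s=1..t. h s x) - ln (real (card X)))"
    for t
  proof (induction t)
    case 0
    show ?case using cpos fin ne by (simp add: ln_div)
  next
    case (Suc t)
    then have IH: "\<forall>x\<in>X. ?p t x > 0" "sum (?p t) X = 1"
      "\<forall>x\<in>X. ln (?p t x) \<ge> eta*gamma*real t - eta*(eta+1)*(\<Sum>s=1..t. h s x) - ln (real (card X))"
      by auto
    have st: "Suc t \<in> {1..T}" using Suc.prems by simp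
    define Z where "Z = (\<Sum>y\<in>X. ?p t y * (1 - eta * h (Suc t) y))"
    have Zeq: "Z = 1 - eta * (\<Sum>y\<in>X. h (Suc t) y * ?p t y)"
      unfolding Z_def using IH(2)
      by (simp add: algebra_simps sum_subtractf sum_distrib_left)
    have hp: "(\<Sum>y\<in>X. h (Suc t) y * ?p t y) \<le> 1"
    proof -
      have "(\<Sum>y\<in>X. h (Suc t) y * ?p t y) \<le> (\<Sum>y\<in>X. ?p t y)"
        apply (rule sum_mono) using hb[OF st] IH(1)
        by (simp add: mult_left_le_one_le less_imp_le)
      then show ?thesis using IH(2) by simp
    qed
    have advt: "(\<Sum>y\<in>X. h (Suc t) y * ?p t y) \<ge> gamma" using adv[OF st] by simp
    have "eta * (\<Sum>y\<in>X. h (Suc t) y * ?p t y) \<le> eta * 1" using hp e0 by (rule mult_left_mono)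
    then have Zpos: "Z \<ge> 1/2" unfolding Zeq using e1 by linarith
    have Zle: "Z \<le> 1 - eta*gamma" unfolding Zeq using advt e0
      by (simp add: mult_left_mono)
    have lnZ: "ln Z \<le> - eta*gamma" using ln_le_minus_one[of Z] Zpos Zle by linarith
    have fac: "x \<in> X \<Longrightarrow> 1 - eta * h (Suc t) x \<ge> 1/2" for x
    proof -
      assume x: "x \<in> X"
      have "eta * h (Suc t) x \<le> eta * 1" using hb[OF st x] e0 by (intro mult_left_mono) auto
      then show ?thesis using e1 by linarith
    qed
    have pS: "?p (Suc t) x = ?p t x * (1 - eta * h (Suc t) x) / Z" for x
      by (simp add: Z_def)
    have pos: "\<forall>x\<in>X. ?p (Suc t) x > 0"
    proof
      fix x assume x: "x \<in> X"
      have "?p t x * (1 - eta * h (Suc t) x) > 0" using IH(1) x fac[OF x] by simp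
      then show "?p (Suc t) x > 0" unfolding pS using Zpos by simp
    qed
    have sum1: "sum (?p (Suc t)) X = 1"
      unfolding pS using Zpos by (simp add: sum_divide_distrib[symmetric] Z_def)
    have lnb: "\<forall>x\<in>X. ln (?p (Suc t) x) \<ge> eta*gamma*real (Suc t) - eta*(eta+1)*(\<Sum>s=1..Suc t. h s x) - ln (real (card X))"
    proof
      fix x assume x: "x \<in> X"
      define u where "u = eta * h (Suc t) x"
      have u0: "0 \<le> u" "u \<le> 1/2" unfolding u_def using hb[OF st x] e0 fac[OF x] by auto
      have E1: "ln (?p (Suc t) x) = ln (?p t x) + ln (1 - u) - ln Z"
        proof -
        have p0: "?p t x > 0" using IH(1) x by simp
        have q0: "1 - u > 0" using u0 by simp
        have z0: "Z > 0" using Zpos by simp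
        have "?p (Suc t) x = ?p t x * (1 - u) / Z" unfolding pS u_def by simp
        then show ?thesis using p0 q0 z0 by (simp add: ln_div ln_mult)
      qed
      have E2: "ln (1-u) \<ge> -u - u^2" using ln_lb u0 by simp
      have E3: "u^2 \<le> eta^2 * h (Suc t) x"
      proof -
        have "u^2 = eta^2 * (h (Suc t) x * h (Suc t) x)" unfolding u_def by (simp add: power2_eq_square)
        also have "\<dots> \<le> eta^2 * h (Suc t) x"
          using hb[OF st x] by (intro mult_left_mono) (auto simp: mult_left_le_one_le)
        finally show ?thesis .
      qed
      have E4: "(\<Sum>s=1..Suc t. h s x) = (\<Sum>s=1..t. h s x) + h (Suc t) x" by simp
      have E5: "ln (?p t x) \<ge> eta*gamma*real t - eta*(eta+1)*(\<Sum>s=1..t. h s x) - ln (real (card X))"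
        using IH(3) x by blast
      have E6: "eta*gamma*real (Suc t) - eta*(eta+1)*(\<Sum>s=1..Suc t. h s x)
         = eta*gamma*real t - eta*(eta+1)*(\<Sum>s=1..t. h s x) + eta*gamma - u - eta^2 * h (Suc t) x"
        unfolding E4 u_def by (simp add: algebra_simps power2_eq_square)
      show "ln (?p (Suc t) x) \<ge> eta*gamma*real (Suc t) - eta*(eta+1)*(\<Sum>s=1..Suc t. h s x) - ln (real (card X))"
        unfolding E6 using E1 E2 E3 E5 lnZ by linarith
    qed
    show ?case using pos sum1 lnb by blast
  qed
  show ?thesis
  proof
    fix x assume x: "x \<in> X"
    have a: "ln (?p T x) \<ge> eta*gamma*real T - eta*(eta+1)*(\<Sum>s=1..T. h s x) - ln (real (card X))"
      using inv[of T] x by auto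
    have b: "gamma * eta / (eta + 2) * real T \<le> eta*gamma*real T"
    proof -
      have "gamma * eta / (eta + 2) \<le> gamma*eta" 
      proof -
        have gz: "0 \<le> gamma*eta" using e0 g0 by simp
        have "gamma*eta \<le> gamma*eta*(eta+2)" using gz e0
          by (metis add_increasing less_imp_le mult_le_cancel_left1 not_le one_le_numeral)
        then show ?thesis using e0 by (simp add: divide_le_eq)
      qed
      then have "gamma * eta / (eta + 2) * real T \<le> gamma*eta * real T" by (rule mult_right_mono) simp
      then show ?thesis by (simp add: mult.commute)
    qed
    have c: "ln (real (card X)) \<le> ln (2 * real (card X))" using cpos by simp
    show "ln (?p T x) \<ge> gamma * eta / (eta + 2) * real T - eta * (eta + 1) * (\<Sum>t=1..T. h t x)
             - ln (2 * real (card X))" using a b c by linarith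
  qed
qed

end
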